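(* Let $m, n \geq 1$ be distinct integers, let $R$ be a $k$-torsion free semiprime ring, where $k=6mn(m+n)|m-n|$, and let $F: R\to R$ be a nonzero generalized $(m,n)$-Jordan derivation. Then $F$ is a derivation which maps $R$ into $Z(R)$.
   Context: $R$ is an associative ring with center $Z(R)$. For an integer $k\geq 2$, $R$ is $k$-torsion free if $kx=0$ implies $x=0$ for all $x\in R$. $R$ is semiprime if $aRa=\{0\}$ implies $a=0$. An additive map $d:R\to R$ is a derivation if $d(xy)=d(x)y+xd(y)$ for all $x,y\in R$. For fixed integers $m,n\geq 0$ with $m+n\neq 0$, an additive map $d:R\to R$ is an $(m,n)$-Jordan derivation if $(m+n)d(x^2)=2md(x)x+2nxd(x)$ for all $x\in R$; an additive map $F:R\to R$ is a generalized $(m,n)$-Jordan derivation if there exists an $(m,n)$-Jordan derivation $d:R\to R$ such that $(m+n)F(x^2)=2mF(x)x+2nxd(x)$ for all $x\in R$. *)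

theory Defs
  imports Main
begin

text \<open>Associative rings, not necessarily unital: type class ring.
  Integer multiples are written via repeated addition.\<close>

definition natmul :: "nat \<Rightarrow> 'a::ring \<Rightarrow> 'a" where
  "natmul k x = (\<Sum>i<k. x)"

definition center :: "'a::ring set" where
  "center = {z. \<forall>x. z * x = x * z}"

definition torsion_free :: "nat \<Rightarrow> 'a::ring itself \<Rightarrow> bool" where
  "torsion_free k _ \<longleftrightarrow> (\<forall>x::'a. natmul k x = 0 \<longrightarrow> x = 0)"

definition semiprime :: "'a::ring itself \<Rightarrow> bool" where
  "semiprime _ \<longleftrightarrow> (\<forall>a::'a. (\<forall>r. a * r * a = 0) \<longrightarrow> a = 0)"

definition additive :: "('a::ring \<Rightarrow> 'a) \<Rightarrow> bool" where
  "additive f \<longleftrightarrow> (\<forall>x y. f (x + y) = f x + f y)"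

definition derivation :: "('a::ring \<Rightarrow> 'a) \<Rightarrow> bool" where
  "derivation d \<longleftrightarrow> additive d \<and> (\<forall>x y. d (x * y) = d x * y + x * d y)"

definition mn_jordan_derivation :: "nat \<Rightarrow> nat \<Rightarrow> ('a::ring \<Rightarrow> 'a) \<Rightarrow> bool" where
  "mn_jordan_derivation m n d \<longleftrightarrow> additive d \<and>
     (\<forall>x. natmul (m + n) (d (x * x)) = natmul (2 * m) (d x * x) + natmul (2 * n) (x * d x))"

definition gen_mn_jordan_derivation :: "nat \<Rightarrow> nat \<Rightarrow> ('a::ring \<Rightarrow> 'a) \<Rightarrow> bool" where
  "gen_mn_jordan_derivation m n F \<longleftrightarrow> additive F \<and>
     (\<exists>d. mn_jordan_derivation m n d \<and>
        (\<forall>x. natmul (m + n) (F (x * x)) = natmul (2 * m) (F x * x) + natmul (2 * n) (x * d x)))"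

end

theory Submission
  imports Defs
begin

lemma natmul_0[simp]: "natmul 0 x = 0" by (simp add: natmul_def)
lemma natmul_Suc: "natmul (Suc k) x = x + natmul k x"
  by (simp add: natmul_def add.commute)
lemma natmul_add_nat: "natmul (i + j) x = natmul i x + natmul j x"
  by (induction i) (simp_all add: natmul_Suc add.assoc)
lemma natmul_distrib: "natmul k (x + y) = natmul k x + natmul k y"
  by (induction k) (simp_all add: natmul_Suc algebra_simps)
lemma natmul_zero[simp]: "natmul k (0::'a::ring) = 0"
  by (induction k) (simp_all add: natmul_Suc)
lemma natmul_neg: "natmul k (- x) = - natmul k (x::'a::ring)"
  by (induction k) (simp_all add: natmul_Suc algebra_simps)
lemma natmul_multL: "natmul k (x * y) = natmul k x * (y::'a::ring)"
  by (induction k) (simp_all add: natmul_Suc algebra_simps)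
lemma natmul_multR: "natmul k (x * y) = x * natmul k (y::'a::ring)"
  by (induction k) (simp_all add: natmul_Suc algebra_simps)
lemma natmul_mult_nat: "natmul (i * j) x = natmul i (natmul j (x::'a::ring))"
  by (induction i) (simp_all add: natmul_Suc natmul_add_nat)

definition zsc :: "int \<Rightarrow> 'a::ring \<Rightarrow> 'a" where
  "zsc c x = (if 0 \<le> c then natmul (nat c) x else - natmul (nat (- c)) x)"

lemma zsc_nat: "zsc (int k) x = natmul k x" by (simp add: zsc_def)
lemma zsc_0[simp]: "zsc 0 x = 0" by (simp add: zsc_def)
lemma zsc_1[simp]: "zsc 1 x = x" by (simp add: zsc_def natmul_def)
lemma zsc_zero[simp]: "zsc c 0 = 0" by (simp add: zsc_def)
lemma zsc_neg_scal: "zsc (- c) x = - zsc c x"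
  by (cases "c = 0") (auto simp add: zsc_def)
lemma zsc_distrib: "zsc c (x + y) = zsc c x + zsc c y"
  by (simp add: zsc_def natmul_distrib)
lemma zsc_neg: "zsc c (- x) = - zsc c x"
  by (simp add: zsc_def natmul_neg)
lemma zsc_diff: "zsc c (x - y) = zsc c x - zsc c y"
  using zsc_distrib[of c x "- y"] zsc_neg[of c y] by simp
lemma zsc_multL: "zsc c (x * y) = zsc c x * y"
  by (simp add: zsc_def natmul_multL)
lemma zsc_multR: "zsc c (x * y) = x * zsc c y"
  by (simp add: zsc_def natmul_multR)

lemma natmul_sub: "j \<le> i \<Longrightarrow> natmul (i - j) x = natmul i x - natmul j (x::'a::ring)"
  using natmul_add_nat[of "i-j" j x] by simp

lemma zsc_add_scal: "zsc (c + d) x = zsc c x + zsc d x"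
proof -
  have A: "zsc (int i - int j) x = natmul i x - natmul j x" for i j
  proof (cases "j \<le> i")
    case True
    then have e: "int i - int j = int (i - j)" by simp
    show ?thesis unfolding e zsc_nat natmul_sub[OF True] ..
  next
    case False
    then have e: "int i - int j = - int (j - i)" by simp
    have "j - i + i = j" using False by simp
    then have "natmul j x = natmul (j - i) x + natmul i x" by (metis natmul_add_nat)
    then show ?thesis unfolding e zsc_neg_scal zsc_nat by (simp add: algebra_simps)
  qed
  obtain i j where c: "c = int i - int j" by (metis int_diff_cases)
  obtain i' j' where d: "d = int i' - int j'" by (metis int_diff_cases)
  have e: "c + d = int (i + i') - int (j + j')" using c d by simp
  have 1: "zsc (c + d) x = natmul (i + i') x - natmul (j + j') x" unfolding e by (rule A)
  have 2: "zsc c x = natmul i x - natmul j x" unfolding c by (rule A)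
  have 3: "zsc d x = natmul i' x - natmul j' x" unfolding d by (rule A)
  show ?thesis unfolding 1 2 3 natmul_add_nat by (simp add: algebra_simps)
qed

lemma zsc_diff_scal: "zsc (c - d) x = zsc c x - zsc d x"
  using zsc_add_scal[of c "- d" x] by (simp add: zsc_neg_scal)

lemma zsc_mult_scal: "zsc (c * d) x = zsc c (zsc d x)"
proof -
  have P: "zsc (int i * d) x = zsc (int i) (zsc d x)" for i
    by (induction i) (simp_all add: zsc_nat natmul_Suc algebra_simps zsc_add_scal)
  show ?thesis
  proof (cases "0 \<le> c")
    case True
    then obtain i where "c = int i" by (metis nonneg_int_cases)
    then show ?thesis using P by simp
  next
    case False
    then obtain i where ci: "c = - int i" by (metis minus_minus neg_0_le_iff_le nonneg_int_cases le_cases)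
    have "zsc (- int i * d) x = - zsc (int i * d) x" by (metis minus_mult_left zsc_neg_scal)
    then show ?thesis using P[of i] ci by (simp add: zsc_neg_scal)
  qed
qed

lemma zsc_comm: "zsc c (zsc d x) = zsc d (zsc c x)"
  by (metis mult.commute zsc_mult_scal)
lemma zsc_Bit0: "zsc (numeral (Num.Bit0 k)) x = zsc (numeral k) x + zsc (numeral k) x"
  by (metis numeral_Bit0 zsc_add_scal)
lemma zsc_Bit1: "zsc (numeral (Num.Bit1 k)) x = zsc (numeral k) x + zsc (numeral k) x + x"
  by (metis numeral_Bit1 zsc_add_scal zsc_1)
lemma zsc_One: "zsc (numeral Num.One) x = x" by simp
lemma zsc_multL': "zsc c x * y = zsc c (x * y)" by (simp add: zsc_multL)
lemma zsc_multR': "x * zsc c y = zsc c (x * y)" by (simp add: zsc_multR)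

lemmas zsimps = zsc_distrib zsc_neg zsc_diff zsc_multL' zsc_multR' zsc_add_scal zsc_diff_scal
  zsc_mult_scal zsc_neg_scal zsc_comm zsc_Bit0 zsc_Bit1 zsc_One

definition cm :: "'a::ring \<Rightarrow> 'a \<Rightarrow> 'a" where "cm u v = u * v - v * u"

lemma additive_zsc:
  fixes f :: "'a::ring \<Rightarrow> 'b::ring"
  assumes "\<And>x y. f (x + y) = f x + f y"
  shows "f (zsc c x) = zsc c (f x)"
proof -
  have f0: "f 0 = 0" using assms[of 0 0] by simp
  have fn: "f (- u) = - f u" for u
  proof -
    have h: "f u + f (- u) = 0" using assms[of u "- u"] f0 by simp
    have "f (- u) = (f u + f (- u)) - f u" by simp
    then show ?thesis using h by simp
  qed
  have N: "f (natmul k x) = natmul k (f x)" for k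
    by (induction k) (simp_all add: natmul_Suc assms f0)
  show ?thesis by (simp add: zsc_def N fn)
qed

lemma lin4:
  fixes F :: "'a::ring \<Rightarrow> 'a \<Rightarrow> 'a \<Rightarrow> 'a \<Rightarrow> 'a"
  assumes A1: "\<And>p p' q r s. F (p + p') q r s = F p q r s + F p' q r s"
    and A2: "\<And>p q q' r s. F p (q + q') r s = F p q r s + F p q' r s"
    and A3: "\<And>p q r r' s. F p q (r + r') s = F p q r s + F p q r' s"
    and A4: "\<And>p q r s s'. F p q r (s + s') = F p q r s + F p q r s'"
    and H: "\<And>t. t \<in> {1, -1, 2, -2} \<Longrightarrow> F (b1 + zsc t e1) (b2 + zsc t e2) (b3 + zsc t e3) (b4 + zsc t e4) = 0"
    and t2: "\<And>x::'a. zsc 2 x = 0 \<Longrightarrow> x = 0"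
    and t3: "\<And>x::'a. zsc 3 x = 0 \<Longrightarrow> x = 0"
  shows "F e1 b2 b3 b4 + F b1 e2 b3 b4 + F b1 b2 e3 b4 + F b1 b2 b3 e4 = 0"
proof -
  have H1: "F p q r s + F p' q r s = F (p + p') q r s" for p p' q r s using A1 by simp
  have Z1: "F (zsc c p) q r s = zsc c (F p q r s)" for c p q r s
    using additive_zsc[of "\<lambda>p. F p q r s"] A1 by blast
  have Z2: "F p (zsc c q) r s = zsc c (F p q r s)" for c p q r s
    using additive_zsc[of "\<lambda>q. F p q r s"] A2 by blast
  have Z3: "F p q (zsc c r) s = zsc c (F p q r s)" for c p q r s
    using additive_zsc[of "\<lambda>r. F p q r s"] A3 by blast
  have Z4: "F p q r (zsc c s) = zsc c (F p q r s)" for c p q r s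
    using additive_zsc[of "\<lambda>s. F p q r s"] A4 by blast
  define f where "f t = F (b1 + zsc t e1) (b2 + zsc t e2) (b3 + zsc t e3) (b4 + zsc t e4)" for t
  have f0: "f 1 = 0" "f (-1) = 0" "f 2 = 0" "f (-2) = 0" unfolding f_def by (rule H; simp)+
  have "zsc 8 (f 1) - zsc 8 (f (-1)) - f 2 + f (-2) =
        zsc 12 (F e1 b2 b3 b4 + F b1 e2 b3 b4 + F b1 b2 e3 b4 + F b1 b2 b3 e4)"
    unfolding f_def A1 A2 A3 A4 Z1 Z2 Z3 Z4
    by (simp add: zsimps algebra_simps)
  then have "zsc 12 (F e1 b2 b3 b4 + F b1 e2 b3 b4 + F b1 b2 e3 b4 + F b1 b2 b3 e4) = 0"
    using f0 by simp
  then have "zsc 2 (zsc 2 (zsc 3 (F e1 b2 b3 b4 + F b1 e2 b3 b4 + F b1 b2 e3 b4 + F b1 b2 b3 e4))) = 0"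
    by (simp add: zsc_mult_scal[symmetric])
  then show ?thesis using t2 t3 by blast
qed

lemma lin3:
  fixes F :: "'a::ring \<Rightarrow> 'a \<Rightarrow> 'a \<Rightarrow> 'a"
  assumes A1: "\<And>p p' q r. F (p + p') q r = F p q r + F p' q r"
    and A2: "\<And>p q q' r. F p (q + q') r = F p q r + F p q' r"
    and A3: "\<And>p q r r'. F p q (r + r') = F p q r + F p q r'"
    and H: "\<And>t. t \<in> {1, -1, 2, -2} \<Longrightarrow> F (b1 + zsc t e1) (b2 + zsc t e2) (b3 + zsc t e3) = 0"
    and t2: "\<And>x::'a. zsc 2 x = 0 \<Longrightarrow> x = 0"
    and t3: "\<And>x::'a. zsc 3 x = 0 \<Longrightarrow> x = 0"
  shows "F e1 b2 b3 + F b1 e2 b3 + F b1 b2 e3 = 0"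
proof -
  have Z1: "F (zsc c p) q r = zsc c (F p q r)" for c p q r
    using additive_zsc[of "\<lambda>p. F p q r"] A1 by blast
  have Z2: "F p (zsc c q) r = zsc c (F p q r)" for c p q r
    using additive_zsc[of "\<lambda>q. F p q r"] A2 by blast
  have Z3: "F p q (zsc c r) = zsc c (F p q r)" for c p q r
    using additive_zsc[of "\<lambda>r. F p q r"] A3 by blast
  define f where "f t = F (b1 + zsc t e1) (b2 + zsc t e2) (b3 + zsc t e3)" for t
  have f0: "f 1 = 0" "f (-1) = 0" "f 2 = 0" "f (-2) = 0" unfolding f_def by (rule H; simp)+
  have "zsc 8 (f 1) - zsc 8 (f (-1)) - f 2 + f (-2) =
        zsc 12 (F e1 b2 b3 + F b1 e2 b3 + F b1 b2 e3)"
    unfolding f_def A1 A2 A3 Z1 Z2 Z3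
    by (simp add: zsimps algebra_simps)
  then have "zsc 12 (F e1 b2 b3 + F b1 e2 b3 + F b1 b2 e3) = 0"
    using f0 by simp
  then have "zsc 2 (zsc 2 (zsc 3 (F e1 b2 b3 + F b1 e2 b3 + F b1 b2 e3))) = 0"
    by (simp add: zsc_mult_scal[symmetric])
  then show ?thesis using t2 t3 by blast
qed

lemma zsc_cancel2:
  assumes "\<And>x::'a::ring. zsc c x = 0 \<Longrightarrow> x = 0" "\<And>x::'a. zsc e x = 0 \<Longrightarrow> x = 0"
    "zsc (c * e) (x::'a) = 0"
  shows "x = 0"
  using assms by (metis zsc_mult_scal)

definition Texp :: "nat \<Rightarrow> nat \<Rightarrow> 'a::ring \<Rightarrow> 'a \<Rightarrow> 'a \<Rightarrow> 'a" where
  "Texp m n x a y = zsc ((int m + int n) * int n) (cm x (cm x y) * a)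
     - zsc ((int m + int n) * int m) (a * cm x (cm x y)) + zsc (2 * int m * int n) (cm x (cm y (cm x a)))"

locale jd =
  fixes d :: "'a::ring \<Rightarrow> 'a" and m n :: nat
  assumes d_add: "\<And>x y. d (x + y) = d x + d y"
    and d_jord: "\<And>x. zsc (int m + int n) (d (x * x)) = zsc (2 * int m) (d x * x) + zsc (2 * int n) (x * d x)"
    and t2: "\<And>x::'a. zsc 2 x = 0 \<Longrightarrow> x = 0"
    and t3: "\<And>x::'a. zsc 3 x = 0 \<Longrightarrow> x = 0"
    and tm: "\<And>x::'a. zsc (int m) x = 0 \<Longrightarrow> x = 0"
    and tn: "\<And>x::'a. zsc (int n) x = 0 \<Longrightarrow> x = 0"
    and tK: "\<And>x::'a. zsc (int m + int n) x = 0 \<Longrightarrow> x = 0"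
    and tD: "\<And>x::'a. zsc (int m - int n) x = 0 \<Longrightarrow> x = 0"
    and sp: "\<And>u::'a. (\<And>r. u * r * u = 0) \<Longrightarrow> u = 0"
begin

lemma d0: "d 0 = 0" using d_add[of 0 0] by simp
lemma d_neg: "d (- x) = - d x"
proof -
  have h: "d x + d (- x) = 0" using d_add[of x "- x"] d0 by simp
  have "d (- x) = (d x + d (- x)) - d x" by simp
  then show ?thesis using h by simp
qed
lemma d_diff: "d (x - y) = d x - d y"
  using d_add[of x "- y"] d_neg[of y] by simp
lemma d_zsc: "d (zsc c x) = zsc c (d x)"
  by (rule additive_zsc) (rule d_add)

lemma d_lin: "zsc (int m + int n) (d (u * v + v * u)) =
   zsc (2 * int m) (d u * v + d v * u) + zsc (2 * int n) (u * d v + v * d u)"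
proof -
  have e: "(u + v) * (u + v) = u * u + (u * v + v * u) + v * v" by (simp add: algebra_simps)
  have "zsc (int m + int n) (d ((u + v) * (u + v))) =
    zsc (int m + int n) (d (u * u)) + zsc (int m + int n) (d (u * v + v * u)) + zsc (int m + int n) (d (v * v))"
    unfolding e d_add zsc_distrib ..
  then show ?thesis unfolding d_jord d_add by (simp add: zsimps algebra_simps)
qed

lemma T0: "Texp m n x (d x) y = 0"
proof -
  define a where "a = d x"
  define b where "b = d y"
  define p where "p = d (x * x)"
  define q where "q = d (x * x * y + y * (x * x))"
  define r where "r = d ((x * x * y + y * (x * x)) * x + x * (x * x * y + y * (x * x)))"
  define s where "s = d (y * x + x * y)"
  define t where "t = d ((x * x) * (y * x + x * y) + (y * x + x * y) * (x * x))"
  have hp: "(zsc (int m + int n) p - (zsc (2 * int m) (a * x) + zsc (2 * int n) (x * a))) = 0" using d_jord[of x] unfolding p_def a_def by simp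
  have hq: "(zsc (int m + int n) q - (zsc (2 * int m) (p * y + b * (x * x)) + zsc (2 * int n) ((x * x) * b + y * p))) = 0" using d_lin[of "x * x" y] unfolding q_def p_def b_def by simp
  have hr: "(zsc (int m + int n) r - (zsc (2 * int m) (q * x + a * (x * x * y + y * (x * x))) + zsc (2 * int n) ((x * x * y + y * (x * x)) * a + x * q))) = 0" using d_lin[of "x * x * y + y * (x * x)" x] unfolding r_def q_def a_def by simp
  have hs: "(zsc (int m + int n) s - (zsc (2 * int m) (b * x + a * y) + zsc (2 * int n) (y * a + x * b))) = 0" using d_lin[of y x] unfolding s_def a_def b_def by simp
  have ht: "(zsc (int m + int n) t - (zsc (2 * int m) (p * (y * x + x * y) + s * (x * x)) + zsc (2 * int n) ((x * x) * s + (y * x + x * y) * p))) = 0" using d_lin[of "x * x" "y * x + x * y"] unfolding t_def s_def p_def by simp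
  have rt: "r - t = 0"
  proof -
    have "(x * x * y + y * (x * x)) * x + x * (x * x * y + y * (x * x)) =
      (x * x) * (y * x + x * y) + (y * x + x * y) * (x * x)" by (simp add: algebra_simps)
    then show ?thesis unfolding r_def t_def by simp
  qed
  have "zsc (2 * (int m - int n)) (Texp m n x a y) =
     zsc (int m + int n) (zsc (int m + int n) (zsc (int m + int n) (r - t))) - (zsc ((-2 * int m * int n) + (-2 * int m * int m)) ((zsc (int m + int n) p - (zsc (2 * int m) (a * x) + zsc (2 * int n) (x * a))) * x * y) + zsc ((-2 * int m * int n) + (2 * int m * int m)) ((zsc (int m + int n) p - (zsc (2 * int m) (a * x) + zsc (2 * int n) (x * a))) * y * x) + zsc ((2 * int m * int n) + (2 * int m * int m)) ((zsc (int m + int n) q - (zsc (2 * int m) (p * y + b * (x * x)) + zsc (2 * int n) ((x * x) * b + y * p))) * x) + zsc ((int n * int n) + (2 * int m * int n) + (int m * int m)) ((zsc (int m + int n) r - (zsc (2 * int m) (q * x + a * (x * x * y + y * (x * x))) + zsc (2 * int n) ((x * x * y + y * (x * x)) * a + x * q)))) + zsc ((-2 * int m * int n) + (-2 * int m * int m)) ((zsc (int m + int n) s - (zsc (2 * int m) (b * x + a * y) + zsc (2 * int n) (y * a + x * b))) * x * x) + zsc ((-1 * int n * int n) + (-2 * int m * int n) + (-1 * int m * int m)) ((zsc (int m + int n) t - (zsc (2 * int m) (p * (y * x + x * y) + s * (x * x)) + zsc (2 * int n) ((x * x) * s + (y * x + x * y) * p)))) + zsc ((4 * int m * int n)) (x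 * (zsc (int m + int n) p - (zsc (2 * int m) (a * x) + zsc (2 * int n) (x * a))) * y) + zsc ((2 * int n * int n) + (2 * int m * int n)) (x * (zsc (int m + int n) q - (zsc (2 * int m) (p * y + b * (x * x)) + zsc (2 * int n) ((x * x) * b + y * p)))) + zsc ((-2 * int n * int n) + (-2 * int m * int n)) (x * x * (zsc (int m + int n) s - (zsc (2 * int m) (b * x + a * y) + zsc (2 * int n) (y * a + x * b)))) + zsc ((2 * int n * int n) + (-2 * int m * int n)) (x * y * (zsc (int m + int n) p - (zsc (2 * int m) (a * x) + zsc (2 * int n) (x * a)))) + zsc ((4 * int m * int n)) (y * (zsc (int m + int n) p - (zsc (2 * int m) (a * x) + zsc (2 * int n) (x * a))) * x) + zsc ((-2 * int n * int n) + (-2 * int m * int n)) (y * x * (zsc (int m + int n) p - (zsc (2 * int m) (a * x) + zsc (2 * int n) (x * a)))))"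
    unfolding Texp_def cm_def by (simp add: zsimps algebra_simps)
  also have "\<dots> = 0" unfolding hp hq hr hs ht rt
    by (simp only: zsc_zero mult_zero_left mult_zero_right add_0_left add_0_right diff_self diff_0_right)
  finally have "zsc (2 * (int m - int n)) (Texp m n x a y) = 0" .
  then have "zsc 2 (zsc (int m - int n) (Texp m n x a y)) = 0" by (simp only: zsc_mult_scal)
  then have "zsc (int m - int n) (Texp m n x a y) = 0" by (metis t2)
  then show ?thesis unfolding a_def by (metis tD)
qed

end

context jd
begin

lemma zsc_mn2: "zsc (2 * int m * int n) X = 0 \<Longrightarrow> X = (0::'a)"
  by (metis zsc_mult_scal t2 tm tn)

lemma a3_0: "cm x (cm x (cm x (d x))) = 0"
proof -
  have "Texp m n x (d x) x = zsc (2 * int m * int n) (cm x (cm x (cm x (d x))))"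
    by (simp add: Texp_def cm_def)
  then show ?thesis using T0 zsc_mn2 by metis
qed

lemma E3: "zsc (int m + int n) (cm x (d x) * cm x (cm x y)) + zsc (2 * int n) (cm x (cm x (d x)) * cm x y) = 0"
proof -
  define a where "a = d x"
  have "zsc (int m) (zsc (int m + int n) (cm x a * cm x (cm x y)) + zsc (2 * int n) (cm x (cm x a) * cm x y))
     = - (x * Texp m n x a y - Texp m n x a (x * y)) - zsc (2 * int m * int n) (cm x (cm x (cm x a)) * y)"
    by (simp add: Texp_def cm_def zsimps algebra_simps)
  also have "\<dots> = 0" using T0 a3_0 unfolding a_def by simp
  finally show ?thesis unfolding a_def using tm by metis
qed

lemma E4: "zsc (int m + int n) (cm x (cm x y) * cm x (d x)) + zsc (2 * int m) (cm x y * cm x (cm x (d x))) = 0"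
proof -
  define a where "a = d x"
  have "zsc (int n) (zsc (int m + int n) (cm x (cm x y) * cm x a) + zsc (2 * int m) (cm x y * cm x (cm x a)))
     = (Texp m n x a (y * x) - Texp m n x a y * x) - zsc (2 * int m * int n) (y * cm x (cm x (cm x a)))"
    by (simp add: Texp_def cm_def zsimps algebra_simps)
  also have "\<dots> = 0" using T0 a3_0 unfolding a_def by simp
  finally show ?thesis unfolding a_def using tn by metis
qed

lemma E1: "cm x (cm x (d x)) * cm x (cm x y) = 0"
proof -
  define a where "a = d x"
  define e3 where "e3 y = zsc (int m + int n) (cm x a * cm x (cm x y)) + zsc (2 * int n) (cm x (cm x a) * cm x y)" for y
  have "zsc (int m + int n) (cm x (cm x a) * cm x (cm x y)) = x * e3 y - e3 (x * y) - zsc (2 * int n) (cm x (cm x (cm x a)) * cm x y)"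
    unfolding e3_def by (simp add: cm_def zsimps algebra_simps)
  also have "\<dots> = 0" using E3 a3_0 unfolding e3_def a_def by simp
  finally show ?thesis unfolding a_def using tK by metis
qed

lemma E2: "cm x (cm x y) * cm x (cm x (d x)) = 0"
proof -
  define a where "a = d x"
  define e4 where "e4 y = zsc (int m + int n) (cm x (cm x y) * cm x a) + zsc (2 * int m) (cm x y * cm x (cm x a))" for y
  have "zsc (int m + int n) (cm x (cm x y) * cm x (cm x a)) = e4 (y * x) - e4 y * x - zsc (2 * int m) (cm x y * cm x (cm x (cm x a)))"
    unfolding e4_def by (simp add: cm_def zsimps algebra_simps)
  also have "\<dots> = 0" using E4 a3_0 unfolding e4_def a_def by simp
  finally show ?thesis unfolding a_def using tK by metis
qed

lemma a2_0: "cm x (cm x (d x)) = 0"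
proof -
  define a where "a = d x"
  define a1 where "a1 = cm x a"
  define a2 where "a2 = cm x a1"
  have e1: "a2 * cm x (cm x y) = 0" for y using E1 unfolding a2_def a1_def a_def .
  have e2: "cm x (cm x y) * a2 = 0" for y using E2 unfolding a2_def a1_def a_def .
  have e3: "zsc (int m + int n) (a1 * cm x (cm x y)) + zsc (2 * int n) (a2 * cm x y) = 0" for y
    using E3 unfolding a2_def a1_def a_def .
  have e4: "zsc (int m + int n) (cm x (cm x y) * a1) + zsc (2 * int m) (cm x y * a2) = 0" for y
    using E4 unfolding a2_def a1_def a_def .
  have v1: "a2 * y * a2 + zsc 2 (a2 * cm x y * a1) = 0" for y
  proof -
    have "a2 * y * a2 + zsc 2 (a2 * cm x y * a1) = a2 * cm x (cm x (y * a)) - a2 * cm x (cm x y) * a"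
      unfolding a2_def a1_def by (simp add: cm_def zsimps algebra_simps)
    then show ?thesis using e1 by simp
  qed
  have v2: "a2 * y * a2 + zsc 2 (a1 * cm x y * a2) = 0" for y
  proof -
    have "a2 * y * a2 + zsc 2 (a1 * cm x y * a2) = cm x (cm x (a * y)) * a2 - a * (cm x (cm x y) * a2)"
      unfolding a2_def a1_def by (simp add: cm_def zsimps algebra_simps)
    then show ?thesis using e2 by simp
  qed
  have ix: "a1 * y * a2 + a2 * y * a1 = 0" for y
  proof -
    have "zsc (int m - int n) (a1 * y * a2 + a2 * y * a1) =
      - ((zsc (int m + int n) (a1 * cm x (cm x (y * a))) + zsc (2 * int n) (a2 * cm x (y * a)))
        - (zsc (int m + int n) (a1 * cm x (cm x y)) + zsc (2 * int n) (a2 * cm x y)) * a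
        - ((zsc (int m + int n) (cm x (cm x (a * y)) * a1) + zsc (2 * int m) (cm x (a * y) * a2))
           - a * (zsc (int m + int n) (cm x (cm x y) * a1) + zsc (2 * int m) (cm x y * a2))))"
      unfolding a2_def a1_def by (simp add: cm_def zsimps algebra_simps)
    also have "\<dots> = 0" unfolding e3 e4 by simp
    finally show ?thesis using tD by metis
  qed
  have "a2 * y * a2 = 0" for y
  proof -
    have "zsc 2 (a2 * y * a2) = (a2 * y * a2 + zsc 2 (a2 * cm x y * a1)) + (a2 * y * a2 + zsc 2 (a1 * cm x y * a2))
       - zsc 2 (a1 * cm x y * a2 + a2 * cm x y * a1)"
      by (simp add: zsimps algebra_simps)
    also have "\<dots> = 0" unfolding v1 v2 ix by simp
    finally show ?thesis using t2 by metis
  qed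
  then show ?thesis using sp unfolding a2_def a1_def a_def by metis
qed

end

context jd
begin

lemma I0: "cm x (d x) * cm x (cm x y) = 0"
proof -
  have "zsc (int m + int n) (cm x (d x) * cm x (cm x y)) = 0" using E3[of x y] by (simp add: a2_0)
  then show ?thesis using tK by metis
qed

lemma J0: "cm x (cm x y) * cm x (d x) = 0"
proof -
  have "zsc (int m + int n) (cm x (cm x y) * cm x (d x)) = 0" using E4[of x y] by (simp add: a2_0)
  then show ?thesis using tK by metis
qed

lemma W0: "cm x (d x) * cm x y * cm x (d x) = 0"
proof -
  define a where "a = d x"
  have "zsc 2 (cm x a * cm x y * cm x a) = cm x a * cm x (cm x (y * a)) - cm x a * cm x (cm x y) * a
     - cm x a * y * cm x (cm x a)"
    by (simp add: cm_def zsimps algebra_simps)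
  also have "\<dots> = 0" using I0 a2_0 unfolding a_def by simp
  finally show ?thesis unfolding a_def using t2 by metis
qed

lemma Sq0: "cm x (d x) * cm x (d x) = 0"
proof -
  define a where "a = d x"
  define a1 where "a1 = cm x a"
  have A2: "cm x a1 = 0" unfolding a1_def a_def by (rule a2_0)
  have I: "a1 * cm x (cm x y) = 0" for y unfolding a1_def a_def by (rule I0)
  have J: "cm x (cm x y) * a1 = 0" for y unfolding a1_def a_def by (rule J0)
  have W: "a1 * cm x y * a1 = 0" for y unfolding a1_def a_def by (rule W0)
  have L: "a1 * a1 * cm x y = 0" for y
  proof -
    have "Texp m n x a (a1 * y) =
      zsc ((int m + int n) * int n) ((cm x (cm x a1) * y + zsc 2 (cm x a1 * cm x y) + a1 * cm x (cm x y)) * a)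
      - zsc ((int m + int n) * int m) (a * (cm x (cm x a1) * y + zsc 2 (cm x a1 * cm x y) + a1 * cm x (cm x y)))
      + zsc (2 * int m * int n) (cm x a1 * y * a1 + a1 * cm x y * a1 + a1 * y * cm x a1
           - cm x a1 * a1 * y - a1 * cm x a1 * y - a1 * a1 * cm x y)"
      unfolding a1_def by (simp add: Texp_def cm_def zsimps algebra_simps)
    also have "\<dots> = zsc (2 * int m * int n) (- (a1 * a1 * cm x y))"
      unfolding A2 I W by (simp add: cm_def)
    finally have "zsc (2 * int m * int n) (a1 * a1 * cm x y) = 0"
      using T0[of x "a1 * y"] unfolding a_def by (simp add: zsc_neg)
    then show ?thesis using zsc_mn2 by metis
  qed
  have R: "cm x y * a1 * a1 = 0" for y
  proof -
    have "Texp m n x a (y * a1) =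
      zsc ((int m + int n) * int n) ((cm x (cm x y) * a1 + zsc 2 (cm x y * cm x a1) + y * cm x (cm x a1)) * a)
      - zsc ((int m + int n) * int m) (a * (cm x (cm x y) * a1 + zsc 2 (cm x y * cm x a1) + y * cm x (cm x a1)))
      + zsc (2 * int m * int n) (cm x y * a1 * a1 + y * cm x a1 * a1 + y * a1 * cm x a1
           - cm x a1 * y * a1 - a1 * cm x y * a1 - a1 * y * cm x a1)"
      unfolding a1_def by (simp add: Texp_def cm_def zsimps algebra_simps)
    also have "\<dots> = zsc (2 * int m * int n) (cm x y * a1 * a1)"
      unfolding A2 J W by (simp add: cm_def)
    finally have "zsc (2 * int m * int n) (cm x y * a1 * a1) = 0"
      using T0[of x "y * a1"] unfolding a_def by simp
    then show ?thesis using zsc_mn2 by metis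
  qed
  have "(a1 * a1) * r * (a1 * a1) = 0" for r
  proof -
    have "(a1 * a1) * r * (a1 * a1) = a1 * a1 * cm x (r * a) * a1 - a1 * a1 * cm x r * a * a1"
      unfolding a1_def by (simp add: cm_def algebra_simps)
    then show ?thesis using L by simp
  qed
  then have "a1 * a1 = 0" by (rule sp)
  then show ?thesis unfolding a1_def a_def .
qed

end

context jd
begin

lemma d_shift: "d (x + zsc t z) = d x + zsc t (d z)"
  by (simp add: d_add d_zsc)

lemma I1: "(cm x (d z) + cm z (d x)) * cm x (cm x V) + cm x (d x) * (cm x (cm z V) + cm z (cm x V)) = 0"
proof -
  define F where "F p q r s = cm p q * cm r (cm s V)" for p q r s :: 'a
  have "F z (d x) x x + F x (d z) x x + F x (d x) z x + F x (d x) x z = 0"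
  proof (rule lin4[of F])
    fix t :: int assume "t \<in> {1, -1, 2, -2}"
    show "F (x + zsc t z) (d x + zsc t (d z)) (x + zsc t z) (x + zsc t z) = 0"
      unfolding F_def d_shift[symmetric] by (rule I0)
  next
    show "\<And>p p' q r s. F (p + p') q r s = F p q r s + F p' q r s" by (simp add: F_def cm_def algebra_simps)
    show "\<And>p q q' r s. F p (q + q') r s = F p q r s + F p q' r s" by (simp add: F_def cm_def algebra_simps)
    show "\<And>p q r r' s. F p q (r + r') s = F p q r s + F p q r' s" by (simp add: F_def cm_def algebra_simps)
    show "\<And>p q r s s'. F p q r (s + s') = F p q r s + F p q r s'" by (simp add: F_def cm_def algebra_simps)
    show "\<And>x::'a. zsc 2 x = 0 \<Longrightarrow> x = 0" by (rule t2)
    show "\<And>x::'a. zsc 3 x = 0 \<Longrightarrow> x = 0" by (rule t3)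
  qed
  then show ?thesis unfolding F_def by (simp add: cm_def algebra_simps)
qed

lemma J1: "cm x (cm x V) * (cm x (d z) + cm z (d x)) + (cm x (cm z V) + cm z (cm x V)) * cm x (d x) = 0"
proof -
  define F where "F p q r s = cm p (cm q V) * cm r s" for p q r s :: 'a
  have "F z x x (d x) + F x z x (d x) + F x x z (d x) + F x x x (d z) = 0"
  proof (rule lin4[of F])
    fix t :: int assume "t \<in> {1, -1, 2, -2}"
    show "F (x + zsc t z) (x + zsc t z) (x + zsc t z) (d x + zsc t (d z)) = 0"
      unfolding F_def d_shift[symmetric] by (rule J0)
  next
    show "\<And>p p' q r s. F (p + p') q r s = F p q r s + F p' q r s" by (simp add: F_def cm_def algebra_simps)
    show "\<And>p q q' r s. F p (q + q') r s = F p q r s + F p q' r s" by (simp add: F_def cm_def algebra_simps)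
    show "\<And>p q r r' s. F p q (r + r') s = F p q r s + F p q r' s" by (simp add: F_def cm_def algebra_simps)
    show "\<And>p q r s s'. F p q r (s + s') = F p q r s + F p q r s'" by (simp add: F_def cm_def algebra_simps)
    show "\<And>x::'a. zsc 2 x = 0 \<Longrightarrow> x = 0" by (rule t2)
    show "\<And>x::'a. zsc 3 x = 0 \<Longrightarrow> x = 0" by (rule t3)
  qed
  then show ?thesis unfolding F_def by (simp add: cm_def algebra_simps)
qed

lemma Sq1: "cm x (d x) * (cm x (d z) + cm z (d x)) + (cm x (d z) + cm z (d x)) * cm x (d x) = 0"
proof -
  define F where "F p q r s = cm p q * cm r s" for p q r s :: 'a
  have "F z (d x) x (d x) + F x (d z) x (d x) + F x (d x) z (d x) + F x (d x) x (d z) = 0"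
  proof (rule lin4[of F])
    fix t :: int assume "t \<in> {1, -1, 2, -2}"
    show "F (x + zsc t z) (d x + zsc t (d z)) (x + zsc t z) (d x + zsc t (d z)) = 0"
      unfolding F_def d_shift[symmetric] by (rule Sq0)
  next
    show "\<And>p p' q r s. F (p + p') q r s = F p q r s + F p' q r s" by (simp add: F_def cm_def algebra_simps)
    show "\<And>p q q' r s. F p (q + q') r s = F p q r s + F p q' r s" by (simp add: F_def cm_def algebra_simps)
    show "\<And>p q r r' s. F p q (r + r') s = F p q r s + F p q r' s" by (simp add: F_def cm_def algebra_simps)
    show "\<And>p q r s s'. F p q r (s + s') = F p q r s + F p q r s'" by (simp add: F_def cm_def algebra_simps)
    show "\<And>x::'a. zsc 2 x = 0 \<Longrightarrow> x = 0" by (rule t2)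
    show "\<And>x::'a. zsc 3 x = 0 \<Longrightarrow> x = 0" by (rule t3)
  qed
  then show ?thesis unfolding F_def by (simp add: cm_def algebra_simps)
qed

lemma A1: "cm z (cm x (d x)) + cm x (cm z (d x)) + cm x (cm x (d z)) = 0"
proof -
  define F where "F p q r = cm p (cm q r)" for p q r :: 'a
  have "F z x (d x) + F x z (d x) + F x x (d z) = 0"
  proof (rule lin3[of F])
    fix t :: int assume "t \<in> {1, -1, 2, -2}"
    show "F (x + zsc t z) (x + zsc t z) (d x + zsc t (d z)) = 0"
      unfolding F_def d_shift[symmetric] by (rule a2_0)
  next
    show "\<And>p p' q r. F (p + p') q r = F p q r + F p' q r" by (simp add: F_def cm_def algebra_simps)
    show "\<And>p q q' r. F p (q + q') r = F p q r + F p q' r" by (simp add: F_def cm_def algebra_simps)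
    show "\<And>p q r r'. F p q (r + r') = F p q r + F p q r'" by (simp add: F_def cm_def algebra_simps)
    show "\<And>x::'a. zsc 2 x = 0 \<Longrightarrow> x = 0" by (rule t2)
    show "\<And>x::'a. zsc 3 x = 0 \<Longrightarrow> x = 0" by (rule t3)
  qed
  then show ?thesis unfolding F_def by simp
qed

lemma W1: "(cm x (d z) + cm z (d x)) * cm x w * cm x (d x) + cm x (d x) * cm x w * (cm x (d z) + cm z (d x))
   + cm x (d x) * cm z w * cm x (d x) = 0"
proof -
  define a where "a = d x"
  define c where "c = d z"
  define q where "q = cm x c + cm z a"
  define a1 where "a1 = cm x a"
  define i1 where "i1 V = q * cm x (cm x V) + a1 * (cm x (cm z V) + cm z (cm x V))" for V
  define i0 where "i0 V = a1 * cm x (cm x V)" for V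
  define A0 where "A0 = cm x a1"
  define A1' where "A1' = cm z a1 + cm x (cm z a) + cm x (cm x c)"
  have hi1: "i1 V = 0" for V unfolding i1_def q_def a1_def a_def c_def using I1 by (simp add: add.commute)
  have hi0: "i0 V = 0" for V unfolding i0_def a1_def a_def by (rule I0)
  have hA0: "A0 = 0" unfolding A0_def a1_def a_def by (rule a2_0)
  have hA1: "A1' = 0" unfolding A1'_def a1_def a_def c_def by (rule A1)
  have "zsc 2 (q * cm x w * a1 + a1 * cm x w * q + a1 * cm z w * a1) =
     i1 (w * a) - i1 w * a + i0 (w * c) - i0 w * c + cm a z * w * A0 + cm c x * w * A0 - a1 * w * A1'"
    unfolding i1_def i0_def A0_def A1'_def q_def a1_def by (simp add: cm_def zsimps algebra_simps)
  also have "\<dots> = 0" unfolding hi1 hi0 hA0 hA1 by simp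
  finally show ?thesis unfolding q_def a1_def a_def c_def using t2 by (metis add.commute)
qed

lemma a1_0: "cm x (d x) = 0"
proof -
  define a where "a = d x"
  define a1 where "a1 = cm x a"
  have key: "a1 * z * a1 * w * a1 = 0" for z w
  proof -
    define c where "c = d z"
    define q where "q = cm x c + cm z a"
    define i1 where "i1 V = q * cm x (cm x V) + a1 * (cm x (cm z V) + cm z (cm x V))" for V
    define j1 where "j1 V = cm x (cm x V) * q + (cm x (cm z V) + cm z (cm x V)) * a1" for V
    define s0 where "s0 = a1 * a1"
    define s1 where "s1 = a1 * q + q * a1"
    define w0 where "w0 V = a1 * cm x V * a1" for V
    define w1 where "w1 V = q * cm x V * a1 + a1 * cm x V * q + a1 * cm z V * a1" for V
    have hi1: "i1 V = 0" for V unfolding i1_def q_def a1_def a_def c_def using I1 by (simp add: add.commute)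
    have hj1: "j1 V = 0" for V unfolding j1_def q_def a1_def a_def c_def using J1 by (simp add: add.commute)
    have hs0: "s0 = 0" unfolding s0_def a1_def a_def by (rule Sq0)
    have hs1: "s1 = 0" unfolding s1_def q_def a1_def a_def c_def using Sq1 by (simp add: add.commute)
    have hw0: "w0 V = 0" for V unfolding w0_def a1_def a_def by (rule W0)
    have hw1: "w1 V = 0" for V unfolding w1_def q_def a1_def a_def c_def using W1 by (simp add: add.commute)
    have "a1 * z * a1 * w * a1 = a1 * j1 (a * w) - a1 * w1 w - a1 * a * j1 w + s1 * cm x w * a1
       + i1 a * w * a1 + s0 * z * w * a1 + zsc 2 (w0 (cm a z * w)) - w1 (a1 * w)"
      unfolding i1_def j1_def s0_def s1_def w0_def w1_def q_def a1_def
      by (simp add: cm_def zsimps algebra_simps)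
    also have "\<dots> = 0" unfolding hi1 hj1 hs0 hs1 hw0 hw1 by simp
    finally show ?thesis .
  qed
  have "a1 * z * a1 = 0" for z
  proof (rule sp)
    fix r show "a1 * z * a1 * r * (a1 * z * a1) = 0"
      using key[of z "r * a1 * z"] by (simp add: mult.assoc)
  qed
  then have "a1 = 0" by (rule sp)
  then show ?thesis unfolding a1_def a_def .
qed

end

locale jordan_der =
  fixes d :: "'a::ring \<Rightarrow> 'a"
  assumes add: "\<And>x y. d (x + y) = d x + d y"
    and sq: "\<And>x. d (x * x) = d x * x + x * d x"
    and t2: "\<And>x::'a. zsc 2 x = 0 \<Longrightarrow> x = 0"
    and sp: "\<And>u::'a. (\<And>r. u * r * u = 0) \<Longrightarrow> u = 0"
begin

lemma d0: "d 0 = 0" using add[of 0 0] by simp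
lemma dneg: "d (- x) = - d x"
proof -
  have h: "d x + d (- x) = 0" using add[of x "- x"] d0 by simp
  have "d (- x) = (d x + d (- x)) - d x" by simp
  then show ?thesis using h by simp
qed
lemma ddiff: "d (x - y) = d x - d y" using add[of x "- y"] dneg[of y] by simp

lemma jl: "d (u * v + v * u) = d u * v + u * d v + d v * u + v * d u"
proof -
  have e: "(u + v) * (u + v) = u * u + (u * v + v * u) + v * v" by (simp add: algebra_simps)
  have "d ((u + v) * (u + v)) = d (u * u) + d (u * v + v * u) + d (v * v)" unfolding e add ..
  then show ?thesis unfolding sq add by (simp add: algebra_simps)
qed

lemma jt: "d (x * y * x) = d x * y * x + x * d y * x + x * y * d x"
proof -
  have e: "x * (x * y + y * x) + (x * y + y * x) * x = ((x * x) * y + y * (x * x)) + (x * y * x + x * y * x)"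
    by (simp add: algebra_simps)
  have "d (x * (x * y + y * x) + (x * y + y * x) * x) = d ((x * x) * y + y * (x * x)) + (d (x * y * x) + d (x * y * x))"
    unfolding e add ..
  then have h: "d x * (x * y + y * x) + x * (d x * y + x * d y + d y * x + y * d x) + (d x * y + x * d y + d y * x + y * d x) * x + (x * y + y * x) * d x
     = (d x * x + x * d x) * y + (x * x) * d y + d y * (x * x) + y * (d x * x + x * d x) + (d (x * y * x) + d (x * y * x))"
    unfolding jl sq .
  have "zsc 2 (d (x * y * x) - (d x * y * x + x * d y * x + x * y * d x)) =
     (d (x * y * x) + d (x * y * x)) - (d x * (x * y + y * x) + x * (d x * y + x * d y + d y * x + y * d x) + (d x * y + x * d y + d y * x + y * d x) * x + (x * y + y * x) * d x
       - ((d x * x + x * d x) * y + (x * x) * d y + d y * (x * x) + y * (d x * x + x * d x)))"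
    by (simp add: zsimps algebra_simps)
  also have "\<dots> = 0" unfolding h by (simp add: algebra_simps)
  finally show ?thesis using t2 by (metis eq_iff_diff_eq_0)
qed

lemma jt3: "d (x * y * z + z * y * x) = d x * y * z + x * d y * z + x * y * d z + d z * y * x + z * d y * x + z * y * d x"
proof -
  have e: "(x + z) * y * (x + z) = x * y * x + (x * y * z + z * y * x) + z * y * z" by (simp add: algebra_simps)
  have "d ((x + z) * y * (x + z)) = d (x * y * x) + d (x * y * z + z * y * x) + d (z * y * z)" unfolding e add ..
  then show ?thesis unfolding jt add by (simp add: algebra_simps)
qed

definition Gf :: "'a \<Rightarrow> 'a \<Rightarrow> 'a" where "Gf x y = d (x * y) - d x * y - x * d y"

lemma her: "Gf x y * w * cm x y + cm x y * w * Gf x y = 0"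
proof -
  define a b e g where "a = d x" and "b = d y" and "e = d w" and "g = d (x * y)"
  have hyx: "d (y * x) = (a * y + x * b + b * x + y * a) - g"
    using jl[of x y] unfolding a_def b_def g_def add by (simp add: algebra_simps)
  have hyx': "d (y * x) = (d x * y + x * d y + d y * x + y * d x) - d (x * y)"
    using hyx unfolding a_def b_def g_def .
  have eU: "(x * y) * w * (y * x) + (y * x) * w * (x * y) = x * (y * w * y) * x + y * (x * w * x) * y"
    by (simp add: algebra_simps)
  have "d ((x * y) * w * (y * x) + (y * x) * w * (x * y)) = d (x * (y * w * y) * x + y * (x * w * x) * y)"
    unfolding eU ..
  moreover have "d ((x * y) * w * (y * x) + (y * x) * w * (x * y)) = d (x * y) * w * (y * x) + (x * y) * d w * (y * x) + (x * y) * w * d (y * x) + d (y * x) * w * (x * y) + (y * x) * d w * (x * y) + (y * x) * w * d (x * y)"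
    by (rule jt3)
  moreover have "d (x * (y * w * y) * x + y * (x * w * x) * y) = d x * (y * w * y) * x + x * (d y * w * y + y * d w * y + y * w * d y) * x + x * (y * w * y) * d x
      + (d y * (x * w * x) * y + y * (d x * w * x + x * d w * x + x * w * d x) * y + y * (x * w * x) * d y)"
    unfolding add jt ..
  ultimately have h: "g * w * (y * x) + (x * y) * e * (y * x) + (x * y) * w * ((a * y + x * b + b * x + y * a) - g)
      + ((a * y + x * b + b * x + y * a) - g) * w * (x * y) + (y * x) * e * (x * y) + (y * x) * w * g
    = a * (y * w * y) * x + x * (b * w * y + y * e * y + y * w * b) * x + x * (y * w * y) * a
      + (b * (x * w * x) * y + y * (a * w * x + x * e * x + x * w * a) * y + y * (x * w * x) * b)"
    unfolding a_def b_def e_def g_def using hyx' by simp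
  have "Gf x y * w * cm x y + cm x y * w * Gf x y =
     - ((g * w * (y * x) + (x * y) * e * (y * x) + (x * y) * w * ((a * y + x * b + b * x + y * a) - g)
      + ((a * y + x * b + b * x + y * a) - g) * w * (x * y) + (y * x) * e * (x * y) + (y * x) * w * g)
     - (a * (y * w * y) * x + x * (b * w * y + y * e * y + y * w * b) * x + x * (y * w * y) * a
      + (b * (x * w * x) * y + y * (a * w * x + x * e * x + x * w * a) * y + y * (x * w * x) * b)))"
    unfolding Gf_def a_def b_def g_def by (simp add: cm_def algebra_simps)
  also have "\<dots> = 0" unfolding h by simp
  finally show ?thesis .
qed

lemma anti:
  fixes u v :: 'a
  assumes h: "\<And>w. u * w * v + v * w * u = 0"
  shows "v * w * u = 0"
proof -
  have k: "v * x * u * y * u = 0" for x y :: 'a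
  proof -
    have "zsc 2 (v * x * u * y * u) = (u * (x * u * y) * v + v * (x * u * y) * u) - u * x * (u * y * v + v * y * u) + (u * x * v + v * x * u) * y * u"
      by (simp add: zsimps algebra_simps)
    also have "\<dots> = 0" using h by simp
    finally show ?thesis using t2 by metis
  qed
  show ?thesis
  proof (rule sp)
    fix r show "v * w * u * r * (v * w * u) = 0" using k[of w "r * v * w"] by (simp add: mult.assoc)
  qed
qed

lemma G_l: "Gf x y * w * cm x y = 0"
  using anti[of "cm x y" "Gf x y"] her by (simp add: add.commute)
lemma G_r: "cm x y * w * Gf x y = 0"
  using anti[of "Gf x y" "cm x y"] her by simp

lemma G_add1: "Gf (x + u) y = Gf x y + Gf u y"
  unfolding Gf_def by (simp add: add algebra_simps)
lemma G_add2: "Gf x (y + v) = Gf x y + Gf x v"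
  unfolding Gf_def by (simp add: add algebra_simps)
lemma cm_add1: "cm (x + u) y = cm x y + cm u y" by (simp add: cm_def algebra_simps)
lemma cm_add2: "cm x (y + v) = cm x y + cm x v" by (simp add: cm_def algebra_simps)

lemma G_l2: "Gf x y * w * cm u y = 0"
proof -
  have e: "Gf x y * w * cm u y + Gf u y * w * cm x y = 0" for w
    using G_l[of "x + u" y w] G_l[of x y w] G_l[of u y w]
    unfolding G_add1 cm_add1 by (simp add: algebra_simps)
  show ?thesis
  proof (rule sp)
    fix r
    have "Gf x y * w * cm u y * r * (Gf x y * w * cm u y) = - (Gf x y * w * (cm u y * r * Gf u y) * w * cm x y)"
      using e[of w] by (metis (no_types, lifting) add_eq_0_iff2 mult.assoc mult_minus_right)
    then show "Gf x y * w * cm u y * r * (Gf x y * w * cm u y) = 0" using G_r by simp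
  qed
qed

lemma G_r2: "cm u y * w * Gf x y = 0"
proof -
  have e: "cm u y * w * Gf x y + cm x y * w * Gf u y = 0" for w
    using G_r[of "x + u" y w] G_r[of x y w] G_r[of u y w]
    unfolding G_add1 cm_add1 by (simp add: algebra_simps)
  show ?thesis
  proof (rule sp)
    fix r
    have "cm u y * w * Gf x y * r * (cm u y * w * Gf x y) = - (cm u y * w * (Gf x y * r * cm x y) * w * Gf u y)"
      using e[of w] by (metis (no_types, lifting) add_eq_0_iff2 mult.assoc mult_minus_right)
    then show "cm u y * w * Gf x y * r * (cm u y * w * Gf x y) = 0" using G_l by simp
  qed
qed

lemma G_l3: "Gf x y * w * cm u v = 0"
proof -
  have e: "Gf x y * w * cm u v + Gf x v * w * cm u y = 0" for w
    using G_l2[of x "y + v" w u] G_l2[of x y w u] G_l2[of x v w u]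
    unfolding G_add2 cm_add2 by (simp add: algebra_simps)
  show ?thesis
  proof (rule sp)
    fix r
    have "Gf x y * w * cm u v * r * (Gf x y * w * cm u v) = - (Gf x y * w * (cm u v * r * Gf x v) * w * cm u y)"
      using e[of w] by (metis (no_types, lifting) add_eq_0_iff2 mult.assoc mult_minus_right)
    then show "Gf x y * w * cm u v * r * (Gf x y * w * cm u v) = 0" using G_r2 by simp
  qed
qed

lemma G_central: "Gf x y * r = r * Gf x y"
proof -
  define c where "c = Gf x y"
  have h: "c * w * cm u v = 0" for w u v unfolding c_def by (rule G_l3)
  have "cm c r = 0"
  proof (rule sp)
    fix s
    have "cm c r * s * cm c r = c * (r * s) * cm c r - r * (c * s * cm c r)"
      by (simp add: cm_def algebra_simps)
    then show "cm c r * s * cm c r = 0" using h by simp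
  qed
  then show ?thesis unfolding c_def cm_def by simp
qed

lemma G_zero: "Gf x y = 0"
proof -
  define c where "c = Gf x y"
  have cen: "c * r = r * c" for r unfolding c_def by (rule G_central)
  have h: "c * w * cm u v = 0" for w u v unfolding c_def by (rule G_l3)
  have cc: "c * cm u v = 0" for u v
  proof (rule sp)
    fix r
    have "c * cm u v * r * (c * cm u v) = c * (cm u v * c * r) * cm u v"
      using cen[of r] by (simp add: mult.assoc)
    then show "c * cm u v * r * (c * cm u v) = 0" using h by simp
  qed
  have two: "zsc 2 c = d (cm x y) - cm (d x) y - cm x (d y)"
  proof -
    have "d (x * y + y * x) = d x * y + x * d y + d y * x + y * d x" by (rule jl)
    then have "d (y * x) = d x * y + x * d y + d y * x + y * d x - d (x * y)" by (simp add: add algebra_simps)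
    then show ?thesis unfolding c_def Gf_def cm_def ddiff by (simp add: zsimps algebra_simps)
  qed
  have "d (c * cm x y + cm x y * c) = d c * cm x y + c * d (cm x y) + d (cm x y) * c + cm x y * d c" by (rule jl)
  moreover have "c * cm x y + cm x y * c = 0" using cc[of x y] cen[of "cm x y"] by simp
  ultimately have h1: "d c * cm x y + c * d (cm x y) + d (cm x y) * c + cm x y * d c = 0" using d0 by simp
  have f1: "c * (d c * cm x y) = 0" using cen[of "d c"] cc[of x y] by (metis mult.assoc mult_zero_right)
  have f2: "c * (d (cm x y) * c) = c * c * d (cm x y)" using cen[of "d (cm x y)"] by (simp add: mult.assoc)
  have f3: "c * (cm x y * d c) = 0" using cc[of x y] by (metis mult.assoc mult_zero_left)
  have "zsc 2 (c * c * d (cm x y)) = c * (d c * cm x y + c * d (cm x y) + d (cm x y) * c + cm x y * d c)"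
    unfolding distrib_left f1 f2 f3 by (simp add: zsimps mult.assoc)
  also have "\<dots> = 0" unfolding h1 by simp
  finally have c2: "c * c * d (cm x y) = 0" using t2 by metis
  have "zsc 2 (c * c * c) = c * c * d (cm x y) - c * (c * cm (d x) y) - c * (c * cm x (d y))"
    unfolding zsc_multR'[symmetric] two by (simp add: algebra_simps)
  also have "\<dots> = 0" unfolding c2 cc by simp
  finally have c3: "c * c * c = 0" using t2 by metis
  have "c * c = 0"
  proof (rule sp)
    fix r show "c * c * r * (c * c) = 0"
      using c3 cen by (metis mult.assoc mult_zero_left)
  qed
  then have "c = 0"
    using sp[of c] cen by (metis mult.assoc mult_zero_left)
  then show ?thesis unfolding c_def .
qed

lemma der: "d (x * y) = d x * y + x * d y"
  using G_zero[of x y] unfolding Gf_def by (simp add: algebra_simps)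

end

lemma central_of_commuting:
  fixes D :: "'a::ring \<Rightarrow> 'a"
  assumes add: "\<And>x y. D (x + y) = D x + D y"
    and der: "\<And>x y. D (x * y) = D x * y + x * D y"
    and com: "\<And>x. cm x (D x) = 0"
    and sp: "\<And>u::'a. (\<And>r. u * r * u = 0) \<Longrightarrow> u = 0"
  shows "D x * r = r * D x"
proof -
  have L: "cm x (D y) + cm y (D x) = 0" for x y
    using com[of "x + y"] com[of x] com[of y] unfolding add by (simp add: cm_def algebra_simps)
  have K: "cm x y * D x = 0" for x y
  proof -
    have "cm x y * D x = (cm x (D (y * x)) + cm (y * x) (D x)) - (cm x (D y) + cm y (D x)) * x - (y * cm x (D x) + y * cm x (D x))"
      unfolding der by (simp add: cm_def algebra_simps)
    then show ?thesis using L[of x "y * x"] L[of x y] com[of x] by simp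
  qed
  have K2: "cm x y * r * D x = 0" for x y r
  proof -
    have "cm x y * r * D x = cm x (y * r) * D x - y * (cm x r * D x)" by (simp add: cm_def algebra_simps)
    then show ?thesis using K by simp
  qed
  have K3: "cm z (D x) * r * D x = 0" for z x r
  proof -
    have "cm (x + z) (D x) * r * D (x + z) = cm x (D x) * r * D x + cm z (D x) * r * D x
        + (cm x (D x) * r * D z + cm z (D x) * r * D z)"
      unfolding add by (simp add: cm_def algebra_simps)
    moreover have "cm (x + z) (D x) * r * D (x + z) = 0" by (rule K2)
    moreover have "cm z (D x) * r * D z = 0" by (rule K2)
    moreover have "cm x (D x) = 0" by (rule com)
    ultimately show ?thesis by simp
  qed
  have "cm r (D x) = 0"
  proof (rule sp)
    fix s
    have "cm r (D x) * s * cm r (D x) = cm r (D x) * (s * r) * D x - cm r (D x) * s * D x * r"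
      by (simp add: cm_def algebra_simps)
    then show "cm r (D x) * s * cm r (D x) = 0" using K3 by simp
  qed
  then show ?thesis unfolding cm_def by simp
qed

context jd
begin

lemma d_sq: "d (x * x) = d x * x + x * d x"
proof -
  have "zsc (int m + int n) (d (x * x) - d x * x - x * d x) =
    (zsc (int m + int n) (d (x * x)) - (zsc (2 * int m) (d x * x) + zsc (2 * int n) (x * d x)))
    - zsc (int m - int n) (cm x (d x))"
    by (simp add: cm_def zsimps algebra_simps)
  also have "\<dots> = 0" unfolding d_jord a1_0 by simp
  finally have "d (x * x) - d x * x - x * d x = 0" by (rule tK)
  then show ?thesis by (simp add: diff_diff_eq)
qed

sublocale jordan_der d
proof (unfold_locales)
  show "d (x + y) = d x + d y" for x y by (rule d_add)
  show "d (x * x) = d x * x + x * d x" for x by (rule d_sq)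
  show "zsc 2 x = 0 \<Longrightarrow> x = 0" for x :: 'a by (rule t2)
  show "(\<And>r. u * r * u = 0) \<Longrightarrow> u = 0" for u :: 'a by (rule sp)
qed

lemma d_der: "d (x * y) = d x * y + x * d y" by (rule der)

lemma d_central: "d x * r = r * d x"
proof (rule central_of_commuting[of d])
  show "d (x + y) = d x + d y" for x y by (rule d_add)
  show "d (x * y) = d x * y + x * d y" for x y by (rule d_der)
  show "cm x (d x) = 0" for x by (rule a1_0)
  show "(\<And>r. u * r * u = 0) \<Longrightarrow> u = 0" for u :: 'a by (rule sp)
qed

end

locale gjd = jd d m n for d :: "'a::ring \<Rightarrow> 'a" and m n +
  fixes F :: "'a \<Rightarrow> 'a"
  assumes F_add: "\<And>x y. F (x + y) = F x + F y"
    and F_jord: "\<And>x. zsc (int m + int n) (F (x * x)) = zsc (2 * int m) (F x * x) + zsc (2 * int n) (x * d x)"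
begin

definition G where "G x = F x - d x"

lemma G_add: "G (x + y) = G x + G y" unfolding G_def by (simp add: F_add d_add)

lemma G_sq: "zsc (int m + int n) (G (x * x)) = zsc (2 * int m) (G x * x)"
proof -
  have c: "x * d x = d x * x" using d_central[of x x] by simp
  have "zsc (int m + int n) (G (x * x)) - zsc (2 * int m) (G x * x) =
    (zsc (int m + int n) (F (x * x)) - (zsc (2 * int m) (F x * x) + zsc (2 * int n) (x * d x)))
    - zsc (int m + int n) (d (x * x) - d x * x - x * d x) - zsc (int m - int n) (x * d x - d x * x)"
    unfolding G_def by (simp add: zsimps algebra_simps)
  also have "\<dots> = 0" unfolding F_jord d_sq c by simp
  finally show ?thesis by simp
qed

lemma G_lin: "zsc (int m + int n) (G (u * v + v * u)) = zsc (2 * int m) (G u * v + G v * u)"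
proof -
  have e: "(u + v) * (u + v) = u * u + (u * v + v * u) + v * v" by (simp add: algebra_simps)
  have "zsc (int m + int n) (G ((u + v) * (u + v))) =
    zsc (int m + int n) (G (u * u)) + zsc (int m + int n) (G (u * v + v * u)) + zsc (int m + int n) (G (v * v))"
    unfolding e G_add zsc_distrib ..
  then show ?thesis unfolding G_sq G_add by (simp add: zsimps algebra_simps)
qed

lemma Gam: "zsc (2 * int m) (G x * x * y * x) = zsc (int m + int n) (G x * (x * x * y + y * (x * x)))"
proof -
  define g where "g = G x"
  define h where "h = G y"
  define p where "p = G (x * x)"
  define q where "q = G (x * x * y + y * (x * x))"
  define r where "r = G ((x * x * y + y * (x * x)) * x + x * (x * x * y + y * (x * x)))"
  define s where "s = G (y * x + x * y)"
  define t where "t = G ((x * x) * (y * x + x * y) + (y * x + x * y) * (x * x))"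
  have hp: "(zsc (int m + int n) p - zsc (2 * int m) (g * x)) = 0" using G_sq[of x] unfolding p_def g_def by simp
  have hq: "(zsc (int m + int n) q - zsc (2 * int m) (p * y + h * (x * x))) = 0" using G_lin[of "x * x" y] unfolding q_def p_def h_def by simp
  have hr: "(zsc (int m + int n) r - zsc (2 * int m) (q * x + g * (x * x * y + y * (x * x)))) = 0" using G_lin[of "x * x * y + y * (x * x)" x] unfolding r_def q_def g_def by simp
  have hs: "(zsc (int m + int n) s - zsc (2 * int m) (h * x + g * y)) = 0" using G_lin[of y x] unfolding s_def g_def h_def by simp
  have ht: "(zsc (int m + int n) t - zsc (2 * int m) (p * (y * x + x * y) + s * (x * x))) = 0" using G_lin[of "x * x" "y * x + x * y"] unfolding t_def s_def p_def by simp
  have rt: "r - t = 0"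
  proof -
    have "(x * x * y + y * (x * x)) * x + x * (x * x * y + y * (x * x)) =
      (x * x) * (y * x + x * y) + (y * x + x * y) * (x * x)" by (simp add: algebra_simps)
    then show ?thesis unfolding r_def t_def by simp
  qed
  have "zsc (2 * int m * (int m - int n)) (zsc (2 * int m) (g * x * y * x) - zsc (int m + int n) (g * (x * x * y + y * (x * x)))) =
     zsc (int m + int n) (zsc (int m + int n) (zsc (int m + int n) (r - t))) - (zsc ((-2 * int m * int n) + (-2 * int m * int m)) ((zsc (int m + int n) p - zsc (2 * int m) (g * x)) * x * y) + zsc ((-2 * int m * int n) + (2 * int m * int m)) ((zsc (int m + int n) p - zsc (2 * int m) (g * x)) * y * x) + zsc ((2 * int m * int n) + (2 * int m * int m)) ((zsc (int m + int n) q - zsc (2 * int m) (p * y + h * (x * x))) * x) + zsc ((int n * int n) + (2 * int m * int n) + (int m * int m)) ((zsc (int m + int n) r - zsc (2 * int m) (q * x + g * (x * x * y + y * (x * x))))) + zsc ((-2 * int m * int n) + (-2 * int m * int m)) ((zsc (int m + int n) s - zsc (2 * int m) (h * x + g * y)) * x * x) + zsc ((-1 * int n * int n) + (-2 * int m * int n) + (-1 * int m * int m)) ((zsc (int m + int n) t - zsc (2 * int m) (p * (y * x + x * y) + s * (x * x)))))"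
    by (simp add: zsimps algebra_simps)
  also have "\<dots> = 0" unfolding hp hq hr hs ht rt
    by (simp only: zsc_zero mult_zero_left mult_zero_right add_0_left add_0_right diff_self diff_0_right)
  finally have "zsc 2 (zsc (int m) (zsc (int m - int n) (zsc (2 * int m) (g * x * y * x) - zsc (int m + int n) (g * (x * x * y + y * (x * x)))))) = 0"
    by (simp only: zsc_mult_scal)
  then have "zsc (int m) (zsc (int m - int n) (zsc (2 * int m) (g * x * y * x) - zsc (int m + int n) (g * (x * x * y + y * (x * x))))) = 0"
    by (rule t2)
  then have "zsc (int m - int n) (zsc (2 * int m) (g * x * y * x) - zsc (int m + int n) (g * (x * x * y + y * (x * x)))) = 0"
    by (rule tm)
  then have "zsc (2 * int m) (g * x * y * x) - zsc (int m + int n) (g * (x * x * y + y * (x * x))) = 0"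
    by (rule tD)
  then show ?thesis unfolding g_def by simp
qed

end

context gjd
begin

lemma g3: "G x * x * x * x = 0"
proof -
  have "zsc 2 (zsc (int n) (G x * x * x * x)) =
     zsc (int m + int n) (G x * (x * x * x + x * (x * x))) - zsc (2 * int m) (G x * x * x * x)"
    by (simp add: zsimps algebra_simps)
  also have "\<dots> = 0" using Gam[of x x] by simp
  finally have "zsc (int n) (G x * x * x * x) = 0" by (rule t2)
  then show ?thesis by (rule tn)
qed

lemma g2: "G x * x * x = 0"
proof (rule sp)
  fix r
  have "zsc (2 * int m) (G x * x * x * r * (G x * x * x)) = zsc (2 * int m) (G x * x * (x * r * G x * x) * x)"
    by (simp add: mult.assoc)
  also have "\<dots> = zsc (int m + int n) (G x * (x * x * (x * r * G x * x) + (x * r * G x * x) * (x * x)))"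
    by (rule Gam)
  also have "\<dots> = zsc (int m + int n) ((G x * x * x * x) * r * G x * x + G x * x * r * (G x * x * x * x))"
    by (simp add: algebra_simps)
  also have "\<dots> = 0" unfolding g3 by simp
  finally have "zsc 2 (zsc (int m) (G x * x * x * r * (G x * x * x))) = 0" by (simp only: zsc_mult_scal)
  then have "zsc (int m) (G x * x * x * r * (G x * x * x)) = 0" by (rule t2)
  then show "G x * x * x * r * (G x * x * x) = 0" by (rule tm)
qed

lemma g1: "G x * x = 0"
proof (rule sp)
  fix r
  have "zsc (2 * int m) (G x * x * r * (G x * x)) = zsc (2 * int m) (G x * x * (r * G x) * x)"
    by (simp add: mult.assoc)
  also have "\<dots> = zsc (int m + int n) (G x * (x * x * (r * G x) + (r * G x) * (x * x)))"
    by (rule Gam)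
  also have "\<dots> = zsc (int m + int n) ((G x * x * x) * r * G x + G x * r * (G x * x * x))"
    by (simp add: algebra_simps)
  also have "\<dots> = 0" unfolding g2 by simp
  finally have "zsc 2 (zsc (int m) (G x * x * r * (G x * x))) = 0" by (simp only: zsc_mult_scal)
  then have "zsc (int m) (G x * x * r * (G x * x)) = 0" by (rule t2)
  then show "G x * x * r * (G x * x) = 0" by (rule tm)
qed

lemma Glin: "G u * v + G v * u = 0"
  using g1[of "u + v"] g1[of u] g1[of v] unfolding G_add by (simp add: algebra_simps)

lemma Gjz: "G (u * v + v * u) = 0"
proof -
  have "zsc (int m + int n) (G (u * v + v * u)) = 0" unfolding G_lin Glin by simp
  then show ?thesis using tK by metis
qed

lemma Gz: "G u = 0"
proof -
  define c where "c = G u"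
  have R1: "c * v * w = - (c * w * v)" for v w
  proof -
    have "c * v * w + c * w * v = - ((G (v * w) + G (w * v)) * u)"
      using Glin[of u "v * w"] Glin[of u "w * v"] unfolding c_def
      by (simp add: mult.assoc algebra_simps eq_neg_iff_add_eq_0)
    also have "\<dots> = 0" using Gjz[of v w] G_add[of "v * w" "w * v"] by simp
    finally show ?thesis by (simp add: eq_neg_iff_add_eq_0)
  qed
  have an: "c * y * z * w = - (c * z * y * w)" for y z w using R1[of y z] by simp
  have sy: "c * y * z * w = c * y * w * z" for y z w
  proof -
    have "c * y * z * w = - (c * w * (y * z))" using R1[of "y * z" w] by (simp add: mult.assoc)
    also have "\<dots> = - (c * w * y * z)" by (simp add: mult.assoc)
    also have "\<dots> = c * y * w * z" using an[of w y z] by simp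
    finally show ?thesis .
  qed
  have S0: "c * y * z * w = 0" for y z w
  proof -
    have "c * y * z * w = - (c * y * z * w)"
      using sy[of y z w] an[of y w z] sy[of w y z] an[of w z y] sy[of z w y] an[of z y w] by simp
    then have "c * y * z * w + c * y * z * w = 0" by (metis add.right_inverse)
    then have "zsc 2 (c * y * z * w) = 0" by (simp add: zsimps)
    then show ?thesis using t2 by metis
  qed
  have S1: "c * y * z = 0" for y z
    by (rule sp) (metis S0 mult.assoc mult_zero_left)
  have S2: "c * y = 0" for y
    by (rule sp) (metis S1 mult.assoc mult_zero_left)
  have "c = 0"
    by (rule sp) (metis S2 mult.assoc mult_zero_left)
  then show ?thesis unfolding c_def .
qed

lemma F_eq_d: "F x = d x"
  using Gz[of x] unfolding G_def by simp

end

lemma tf_from: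
  assumes tf: "torsion_free N TYPE('a::ring)" and dv: "c dvd int N" and z: "zsc c (x::'a) = 0"
  shows "x = 0"
proof -
  obtain e where e: "int N = c * e" using dv by (auto elim: dvdE)
  have "natmul N x = zsc (int N) x" by (simp add: zsc_nat)
  also have "\<dots> = zsc e (zsc c x)" unfolding e by (metis mult.commute zsc_mult_scal)
  also have "\<dots> = 0" using z by simp
  finally show ?thesis using tf unfolding torsion_free_def by blast
qed

theorem theorem1p3:
  fixes F :: "'a::ring \<Rightarrow> 'a" and m n :: nat
  assumes "m \<ge> 1" and "n \<ge> 1" and "m \<noteq> n"
    and "torsion_free (6 * m * n * (m + n) * (if m \<ge> n then m - n else n - m)) TYPE('a)"
    and "semiprime TYPE('a)"
    and "F \<noteq> (\<lambda>_. 0)"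
    and "gen_mn_jordan_derivation m n F"
  shows "derivation F \<and> (\<forall>x. F x \<in> center)"
proof -
  define N where "N = 6 * m * n * (m + n) * (if m \<ge> n then m - n else n - m)"
  have tf: "torsion_free N TYPE('a)" using assms(4) unfolding N_def .
  have iN: "int N = 2 * 3 * int m * int n * (int m + int n) * \<bar>int m - int n\<bar>"
    unfolding N_def by (auto simp add: of_nat_diff)
  have dv2: "2 dvd int N" unfolding iN
    by (rule dvdI[of _ _ "3 * int m * int n * (int m + int n) * \<bar>int m - int n\<bar>"]) (simp add: algebra_simps)
  have dv3: "3 dvd int N" unfolding iN
    by (rule dvdI[of _ _ "2 * int m * int n * (int m + int n) * \<bar>int m - int n\<bar>"]) (simp add: algebra_simps)
  have dvm: "int m dvd int N" unfolding iN
    by (rule dvdI[of _ _ "6 * int n * (int m + int n) * \<bar>int m - int n\<bar>"]) (simp add: algebra_simps)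
  have dvn: "int n dvd int N" unfolding iN
    by (rule dvdI[of _ _ "6 * int m * (int m + int n) * \<bar>int m - int n\<bar>"]) (simp add: algebra_simps)
  have dvK: "(int m + int n) dvd int N" unfolding iN
    by (rule dvdI[of _ _ "6 * int m * int n * \<bar>int m - int n\<bar>"]) (simp add: algebra_simps)
  have dvD: "(int m - int n) dvd int N"
  proof -
    have "(int m - int n) dvd \<bar>int m - int n\<bar>" by simp
    then have "(int m - int n) dvd (2 * 3 * int m * int n * (int m + int n)) * \<bar>int m - int n\<bar>"
      by (rule dvd_mult)
    then show ?thesis unfolding iN .
  qed
  have tc: "(x::'a) = 0" if "zsc c x = 0" "c dvd int N" for c x
    using tf_from[OF tf that(2) that(1)] .
  obtain d where Fadd: "additive F" and md: "mn_jordan_derivation m n d"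
    and Fj: "\<And>x. natmul (m + n) (F (x * x)) = natmul (2 * m) (F x * x) + natmul (2 * n) (x * d x)"
    using assms(7) unfolding gen_mn_jordan_derivation_def by blast
  have dadd: "additive d" and dj: "\<And>x. natmul (m + n) (d (x * x)) = natmul (2 * m) (d x * x) + natmul (2 * n) (x * d x)"
    using md unfolding mn_jordan_derivation_def by blast+
  have cv: "natmul (m + n) X = zsc (int m + int n) X" "natmul (2 * m) X = zsc (2 * int m) X"
    "natmul (2 * n) X = zsc (2 * int n) X" for X :: 'a
    by (simp_all add: zsc_nat[symmetric])
  interpret gjd d m n F
  proof (unfold_locales)
    show "d (x + y) = d x + d y" for x y using dadd unfolding additive_def by blast
    show "zsc (int m + int n) (d (x * x)) = zsc (2 * int m) (d x * x) + zsc (2 * int n) (x * d x)" for x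
      using dj[of x] unfolding cv .
    show "zsc 2 x = 0 \<Longrightarrow> x = 0" for x :: 'a using tc dv2 by blast
    show "zsc 3 x = 0 \<Longrightarrow> x = 0" for x :: 'a using tc dv3 by blast
    show "zsc (int m) x = 0 \<Longrightarrow> x = 0" for x :: 'a using tc dvm by blast
    show "zsc (int n) x = 0 \<Longrightarrow> x = 0" for x :: 'a using tc dvn by blast
    show "zsc (int m + int n) x = 0 \<Longrightarrow> x = 0" for x :: 'a using tc dvK by blast
    show "zsc (int m - int n) x = 0 \<Longrightarrow> x = 0" for x :: 'a using tc dvD by blast
    show "(\<And>r. u * r * u = 0) \<Longrightarrow> u = 0" for u :: 'a
      using assms(5) unfolding semiprime_def by blast
    show "F (x + y) = F x + F y" for x y using Fadd unfolding additive_def by blast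
    show "zsc (int m + int n) (F (x * x)) = zsc (2 * int m) (F x * x) + zsc (2 * int n) (x * d x)" for x
      using Fj[of x] unfolding cv .
  qed
  have "derivation F"
    unfolding derivation_def additive_def F_eq_d by (simp add: d_add d_der)
  moreover have "\<forall>x. F x \<in> center"
    unfolding center_def F_eq_d using d_central by blast
  ultimately show ?thesis by blast
qed

end
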